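(* Let $I$ be an ideal in $P=\mathbb{Q}[x_1,\dots,x_n]$, let $\Delta(I)$ be its universal denominator, and let $p$ be a prime not dividing $\Delta(I)$. Then the ideal $I_{(p,\sigma)}\subseteq\mathbb{F}_p[x_1,\dots,x_n]$ does not depend on the term ordering $\sigma$ on $\mathbb{T}^n$.
   Context: $\mathbb{T}^n$ is the monoid of power-products in $x_1,\dots,x_n$. For $f\in P$, $\operatorname{den}(f)$ is the positive least common multiple of the denominators of the coefficients of $f$ (with $\operatorname{den}(0)=1$); for a set $F$, $\operatorname{den}(F)$ is the lcm of the $\operatorname{den}(f)$, $f\in F$. For a term ordering $\sigma$ with $G_\sigma$ the reduced $\sigma$-Gröbner basis of $I$, set $\operatorname{den}_\sigma(I)=\operatorname{den}(G_\sigma)$. Since an ideal has only finitely many distinct reduced Gröbner bases (finiteness of the Gröbner fan), the universal denominator $\Delta(I)$, defined as the least common multiple of all $\operatorname{den}_\sigma(I)$ as $\sigma$ ranges over all term orderings, is a well-defined positive integer. For a prime $p\nmid\operatorname{den}_\sigma(I)$, $\pi_p$ denotes coefficientwise reduction modulo $p$ and $I_{(p,\sigma)}$ is the ideal of $\mathbb{F}_p[x_1,\dots,x_n]$ generated by $\pi_p(G_\sigma)$. *)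

theory Defs
  imports "HOL-Library.Poly_Mapping" "Berlekamp_Zassenhaus.Finite_Field"
begin

text \<open>Power-products in x_0..x_(n-1): exponent vectors nat =>0 nat with keys below n.
 Polynomials with coefficients in 'a: (nat =>0 nat) =>0 'a.\<close>

type_synonym pp = "nat \<Rightarrow>\<^sub>0 nat"
type_synonym 'a mpoly = "pp \<Rightarrow>\<^sub>0 'a"

definition PP :: "nat \<Rightarrow> pp set" where
  "PP n = {t. Poly_Mapping.keys t \<subseteq> {..<n}}"

definition Polys :: "nat \<Rightarrow> ('a::zero) mpoly set" where
  "Polys n = {f. Poly_Mapping.keys f \<subseteq> PP n}"

definition pp_dvd :: "pp \<Rightarrow> pp \<Rightarrow> bool" where
  "pp_dvd s t \<longleftrightarrow> (\<exists>u. t = s + u)"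

definition term_order :: "nat \<Rightarrow> (pp \<Rightarrow> pp \<Rightarrow> bool) \<Rightarrow> bool" where
  "term_order n ordr \<longleftrightarrow>
     (\<forall>s\<in>PP n. ordr s s) \<and>
     (\<forall>s\<in>PP n. \<forall>t\<in>PP n. ordr s t \<and> ordr t s \<longrightarrow> s = t) \<and>
     (\<forall>s\<in>PP n. \<forall>t\<in>PP n. \<forall>u\<in>PP n. ordr s t \<and> ordr t u \<longrightarrow> ordr s u) \<and>
     (\<forall>s\<in>PP n. \<forall>t\<in>PP n. ordr s t \<or> ordr t s) \<and>
     (\<forall>t\<in>PP n. ordr 0 t) \<and>
     (\<forall>s\<in>PP n. \<forall>t\<in>PP n. \<forall>u\<in>PP n. ordr s t \<longrightarrow> ordr (s + u) (t + u))"

text \<open>Leading term w.r.t. the ordering (meaningful for f ~= 0).\<close>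
definition lterm :: "(pp \<Rightarrow> pp \<Rightarrow> bool) \<Rightarrow> ('a::zero) mpoly \<Rightarrow> pp" where
  "lterm ordr f = (THE t. t \<in> Poly_Mapping.keys f \<and> (\<forall>s\<in>Poly_Mapping.keys f. ordr s t))"

definition lcoeff :: "(pp \<Rightarrow> pp \<Rightarrow> bool) \<Rightarrow> ('a::zero) mpoly \<Rightarrow> 'a" where
  "lcoeff ordr f = Poly_Mapping.lookup f (lterm ordr f)"

definition ideal_gen :: "nat \<Rightarrow> ('a::comm_ring_1) mpoly set \<Rightarrow> 'a mpoly set" where
  "ideal_gen n F = {f. \<exists>A q. finite A \<and> A \<subseteq> F \<and> (\<forall>g\<in>A. q g \<in> Polys n) \<and>
                          f = (\<Sum>g\<in>A. q g * g)}"

definition is_ideal :: "nat \<Rightarrow> ('a::comm_ring_1) mpoly set \<Rightarrow> bool" where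
  "is_ideal n I \<longleftrightarrow> I \<subseteq> Polys n \<and> 0 \<in> I \<and> (\<forall>f\<in>I. \<forall>g\<in>I. f + g \<in> I) \<and>
                     (\<forall>f\<in>I. \<forall>q\<in>Polys n. q * f \<in> I)"

definition reduced_GB :: "nat \<Rightarrow> (pp \<Rightarrow> pp \<Rightarrow> bool) \<Rightarrow> ('a::field) mpoly set \<Rightarrow> 'a mpoly set \<Rightarrow> bool" where
  "reduced_GB n ordr I G \<longleftrightarrow>
     finite G \<and> G \<subseteq> I \<and> 0 \<notin> G \<and> ideal_gen n G = I \<and>
     (\<forall>f\<in>I. f \<noteq> 0 \<longrightarrow> (\<exists>g\<in>G. pp_dvd (lterm ordr g) (lterm ordr f))) \<and>
     (\<forall>g\<in>G. lcoeff ordr g = 1) \<and>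
     (\<forall>g\<in>G. \<forall>t\<in>Poly_Mapping.keys g. \<forall>h\<in>G. (h \<noteq> g \<or> t \<noteq> lterm ordr g) \<longrightarrow> \<not> pp_dvd (lterm ordr h) t)"

definition den :: "rat mpoly \<Rightarrow> nat" where
  "den f = Lcm ((\<lambda>c. nat (snd (quotient_of c))) ` (Poly_Mapping.lookup f ` Poly_Mapping.keys f))"

definition den_set :: "rat mpoly set \<Rightarrow> nat" where
  "den_set F = Lcm (den ` F)"

definition univ_den :: "nat \<Rightarrow> rat mpoly set \<Rightarrow> nat" where
  "univ_den n I = Lcm {den_set G | ordr G. term_order n ordr \<and> reduced_GB n ordr I G}"

text \<open>Coefficientwise reduction modulo p = CARD('p) (for coefficients whose denominator
 is prime to p).\<close>
definition red_coeff :: "rat \<Rightarrow> ('p::prime_card) mod_ring" where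
  "red_coeff c = (case quotient_of c of (a, b) \<Rightarrow> of_int a / of_int b)"

definition red_poly :: "rat mpoly \<Rightarrow> ('p::prime_card) mod_ring mpoly" where
  "red_poly f = Poly_Mapping.map red_coeff f"

end

theory Submission
  imports Defs
begin



definition intg :: "nat \<Rightarrow> rat \<Rightarrow> bool" where
  "intg p c \<longleftrightarrow> (\<exists>a b. \<not> int p dvd b \<and> c = of_int a / of_int b)"

lemma of_int_mod_ring_eq0:
  "(of_int b :: 'p::prime_card mod_ring) = 0 \<longleftrightarrow> int CARD('p) dvd b"
proof (cases "b \<ge> 0")
  case True
  then obtain m where m: "b = int m" by (metis nonneg_int_cases)
  have "(of_int b :: 'p mod_ring) = of_nat m" by (simp add: m)
  thus ?thesis by (simp add: of_nat_eq_0_iff_char_dvd m)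
next
  case False
  then obtain m where m: "b = - int m" by (metis nonneg_int_cases neg_0_le_iff_le less_le_not_le nle_le minus_minus)
  have "(of_int b :: 'p mod_ring) = - of_nat m" by (simp add: m)
  thus ?thesis by (simp add: of_nat_eq_0_iff_char_dvd m)
qed

lemma red_coeff_eq:
  assumes "\<not> int CARD('p::prime_card) dvd b" "c = of_int a / of_int b"
  shows "(red_coeff c :: 'p mod_ring) = of_int a / of_int b"
proof -
  obtain a' b' where q: "quotient_of c = (a', b')" by (cases "quotient_of c")
  have b': "b' > 0" using q quotient_of_denom_pos by blast
  have c': "c = of_int a' / of_int b'" using q quotient_of_div by blast
  have b0: "b \<noteq> 0" using assms(1) by auto
  have "of_int a' * of_int b = (of_int a * of_int b' :: rat)"
    using c' assms(2) b0 b' by (simp add: field_simps)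
  hence e: "a' * b = a * b'" by (metis of_int_eq_iff of_int_mult)
  have db': "int CARD('p) dvd b'" if "(of_int b' :: 'p mod_ring) = 0"
    using that by (simp add: of_int_mod_ring_eq0)
  have nb: "(of_int b :: 'p mod_ring) \<noteq> 0" using assms(1) by (simp add: of_int_mod_ring_eq0)
  have "(of_int a' * of_int b :: 'p mod_ring) = of_int a * of_int b'"
    by (metis e of_int_mult)
  moreover have nb': "(of_int b' :: 'p mod_ring) \<noteq> 0"
  proof
    assume "(of_int b' :: 'p mod_ring) = 0"
    hence "(of_int a' * of_int b :: 'p mod_ring) = 0" using \<open>(of_int a' * of_int b :: 'p mod_ring) = of_int a * of_int b'\<close> by simp
    hence "(of_int a' :: 'p mod_ring) = 0" using nb by simp
    hence "int CARD('p) dvd a'" by (simp add: of_int_mod_ring_eq0)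
    moreover have "int CARD('p) dvd b'" using db' \<open>(of_int b' :: 'p mod_ring) = 0\<close> by blast
    moreover have "coprime a' b'" using q quotient_of_coprime by blast
    moreover have "int CARD('p) > 1" using prime_card[where 'a='p] prime_gt_1_nat by fastforce
    ultimately show False
      by (metis coprime_common_divisor int_ops(2) less_irrefl of_nat_less_iff abs_of_nat zdvd1_eq)
  qed
  ultimately have "(of_int a' / of_int b' :: 'p mod_ring) = of_int a / of_int b"
    using nb by (simp add: field_simps)
  thus ?thesis using q by (simp add: red_coeff_def)
qed




lemma prime_int_card: "prime (int CARD('p::prime_card))"
  using prime_card[where 'a='p] by simp

lemma not_dvd_mult_pc: "\<not> int CARD('p::prime_card) dvd b \<Longrightarrow> \<not> int CARD('p) dvd b' \<Longrightarrow> \<not> int CARD('p) dvd (b*b')"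
  using prime_int_card[where 'p='p] prime_dvd_mult_iff by blast

abbreviation "pc TYPE('p::prime_card) \<equiv> CARD('p)"

lemma intg_add: "intg CARD('p::prime_card) x \<Longrightarrow> intg CARD('p) y \<Longrightarrow> intg CARD('p) (x+y)
   \<and> (red_coeff (x+y) :: 'p mod_ring) = red_coeff x + red_coeff y"
proof -
  assume "intg CARD('p) x" "intg CARD('p) y"
  then obtain a b a' b' where ab: "\<not> int CARD('p) dvd b" "x = of_int a / of_int b"
    and ab': "\<not> int CARD('p) dvd b'" "y = of_int a' / of_int b'" unfolding intg_def by blast
  have b0: "b \<noteq> 0" "b' \<noteq> 0" using ab ab' by auto
  have e: "x + y = of_int (a*b' + a'*b) / of_int (b*b')" using ab ab' b0 by (simp add: field_simps)
  have nd: "\<not> int CARD('p) dvd (b*b')" using not_dvd_mult_pc ab ab' by blast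
  have nb: "(of_int b :: 'p mod_ring) \<noteq> 0" "(of_int b' :: 'p mod_ring) \<noteq> 0"
    using ab ab' by (simp_all add: of_int_mod_ring_eq0)
  have i: "intg CARD('p) (x+y)" unfolding intg_def using nd e by blast
  have "(red_coeff (x+y) :: 'p mod_ring) = of_int (a*b' + a'*b) / of_int (b*b')"
    using red_coeff_eq[OF nd e] .
  also have "\<dots> = of_int a / of_int b + of_int a' / of_int b'"
    using add_frac_eq[OF nb, of "of_int a" "of_int a'"] by simp
  also have "\<dots> = red_coeff x + red_coeff y"
    using red_coeff_eq[OF ab(1,2)] red_coeff_eq[OF ab'(1,2)] by simp
  finally show ?thesis using i by simp
qed

lemma intg_mult: "intg CARD('p::prime_card) x \<Longrightarrow> intg CARD('p) y \<Longrightarrow> intg CARD('p) (x*y)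
   \<and> (red_coeff (x*y) :: 'p mod_ring) = red_coeff x * red_coeff y"
proof -
  assume "intg CARD('p) x" "intg CARD('p) y"
  then obtain a b a' b' where ab: "\<not> int CARD('p) dvd b" "x = of_int a / of_int b"
    and ab': "\<not> int CARD('p) dvd b'" "y = of_int a' / of_int b'" unfolding intg_def by blast
  have b0: "b \<noteq> 0" "b' \<noteq> 0" using ab ab' by auto
  have e: "x * y = of_int (a*a') / of_int (b*b')" using ab ab' b0 by simp
  have nd: "\<not> int CARD('p) dvd (b*b')" using not_dvd_mult_pc ab ab' by blast
  have nb: "(of_int b :: 'p mod_ring) \<noteq> 0" "(of_int b' :: 'p mod_ring) \<noteq> 0"
    using ab ab' by (simp_all add: of_int_mod_ring_eq0)
  have i: "intg CARD('p) (x*y)" unfolding intg_def using nd e by blast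
  have "(red_coeff (x*y) :: 'p mod_ring) = of_int (a*a') / of_int (b*b')"
    using red_coeff_eq[OF nd e] .
  also have "\<dots> = (of_int a / of_int b) * (of_int a' / of_int b')"
    by (simp add: times_divide_times_eq)
  also have "\<dots> = red_coeff x * red_coeff y"
    using red_coeff_eq[OF ab(1,2)] red_coeff_eq[OF ab'(1,2)] by simp
  finally show ?thesis using i by simp
qed

lemma intg_of_int: "intg CARD('p::prime_card) (of_int a) \<and> (red_coeff (of_int a) :: 'p mod_ring) = of_int a"
proof -
  have nd: "\<not> int CARD('p) dvd 1" using prime_card[where 'a='p] prime_gt_1_nat[of "CARD('p)"] by auto
  have e: "(of_int a :: rat) = of_int a / of_int 1" by simp
  have "intg CARD('p) (of_int a)" unfolding intg_def using nd e by blast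
  thus ?thesis using red_coeff_eq[OF nd e] by simp
qed

lemma intg_neg: "intg CARD('p::prime_card) x \<Longrightarrow> intg CARD('p) (-x)
   \<and> (red_coeff (-x) :: 'p mod_ring) = - red_coeff x"
  using intg_mult[of x "of_int (-1)", where 'p='p] intg_of_int[of "-1", where 'p='p] by simp

lemma intg_diff: "intg CARD('p::prime_card) x \<Longrightarrow> intg CARD('p) y \<Longrightarrow> intg CARD('p) (x-y)
   \<and> (red_coeff (x-y) :: 'p mod_ring) = red_coeff x - red_coeff y"
  using intg_add[of x "-y", where 'p='p] intg_neg[of y, where 'p='p] by simp

lemma red_coeff_0: "(red_coeff 0 :: 'p::prime_card mod_ring) = 0"
  using intg_of_int[of 0, where 'p='p] by simp

lemma red_coeff_1: "(red_coeff 1 :: 'p::prime_card mod_ring) = 1"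
  using intg_of_int[of 1, where 'p='p] by simp

lemma intg_0: "intg CARD('p::prime_card) 0" using intg_of_int[of 0, where 'p='p] by simp




lemma lookup_red: "Poly_Mapping.lookup (red_poly f :: 'p::prime_card mod_ring mpoly) s = (red_coeff (Poly_Mapping.lookup f s) :: 'p mod_ring)"
  unfolding red_poly_def by transfer (auto simp: when_def red_coeff_0)

lemma sum_any_single_when:
  fixes h :: "('a::comm_monoid_add) mpoly" and u s :: pp
  shows "(\<Sum>q. Poly_Mapping.lookup h q when s = u + q) = (if (\<exists>v. s = u + v) then Poly_Mapping.lookup h (s - u) else 0)"
proof (cases "\<exists>v. s = u + v")
  case True
  then obtain v where v: "s = u + v" by blast
  have "(\<lambda>q. Poly_Mapping.lookup h q when s = u + q) = (\<lambda>q. Poly_Mapping.lookup h v when q = v)"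
    by (rule ext) (auto simp: v when_def)
  thus ?thesis using True v by simp
next
  case False
  hence "(\<lambda>q. Poly_Mapping.lookup h q when s = u + q) = (\<lambda>q. 0)" by (auto simp: when_def)
  thus ?thesis using False by simp
qed

lemma lookup_single_mult:
  fixes h :: "('a::comm_semiring_1) mpoly" and u s :: pp
  shows "Poly_Mapping.lookup (Poly_Mapping.single u c * h) s = (if (\<exists>v. s = u + v) then c * Poly_Mapping.lookup h (s - u) else 0)"
proof -
  have "Poly_Mapping.lookup (Poly_Mapping.single u c * h) s = (\<Sum>l. Poly_Mapping.lookup (Poly_Mapping.single u c) l * (\<Sum>q. Poly_Mapping.lookup h q when s = l + q))"
    by (rule lookup_mult)
  also have "\<dots> = (\<Sum>l. (c * (\<Sum>q. Poly_Mapping.lookup h q when s = u + q)) when l = u)"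
    by (rule Sum_any.cong) (auto simp: lookup_single when_def)
  also have "\<dots> = c * (\<Sum>q. Poly_Mapping.lookup h q when s = u + q)" by simp
  finally show ?thesis by (simp add: sum_any_single_when)
qed




lemma PP_add: "s \<in> PP n \<Longrightarrow> t \<in> PP n \<Longrightarrow> s + t \<in> PP n"
  unfolding PP_def using keys_add[of s t] by blast

lemma Polys_single: "u \<in> PP n \<Longrightarrow> Poly_Mapping.single u c \<in> Polys n"
  unfolding Polys_def by auto

lemma Polys_add: "f \<in> Polys n \<Longrightarrow> g \<in> Polys n \<Longrightarrow> f + g \<in> Polys n"
  unfolding Polys_def using keys_add[of f g] by blast

lemma Polys_mult: "f \<in> Polys n \<Longrightarrow> g \<in> Polys n \<Longrightarrow> (f * g :: ('a::comm_semiring_0) mpoly) \<in> Polys n"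
  unfolding Polys_def using keys_mult[of f g] PP_add by blast

lemma Polys_zero: "0 \<in> Polys n" unfolding Polys_def by simp

lemma ideal_gen_zero: "0 \<in> ideal_gen n F"
  unfolding ideal_gen_def
proof (intro CollectI exI conjI)
  show "0 = (\<Sum>g\<in>{}. (\<lambda>_. 0) g * g)" by simp
qed auto

lemma ideal_gen_add:
  assumes "x \<in> ideal_gen n F" "y \<in> ideal_gen n F"
  shows "x + y \<in> ideal_gen n (F :: ('a::comm_ring_1) mpoly set)"
proof -
  obtain A1 q1 where 1: "finite A1" "A1 \<subseteq> F" "\<forall>g\<in>A1. q1 g \<in> Polys n" "x = (\<Sum>g\<in>A1. q1 g * g)"
    using assms(1) unfolding ideal_gen_def by blast
  obtain A2 q2 where 2: "finite A2" "A2 \<subseteq> F" "\<forall>g\<in>A2. q2 g \<in> Polys n" "y = (\<Sum>g\<in>A2. q2 g * g)"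
    using assms(2) unfolding ideal_gen_def by blast
  define q1' where "q1' g = (if g \<in> A1 then q1 g else 0)" for g
  define q2' where "q2' g = (if g \<in> A2 then q2 g else 0)" for g
  have s1: "(\<Sum>g\<in>A1 \<union> A2. q1' g * g) = x"
    unfolding 1(4) q1'_def by (rule sum.mono_neutral_cong_right) (use 1 2 in auto)
  have s2: "(\<Sum>g\<in>A1 \<union> A2. q2' g * g) = y"
    unfolding 2(4) q2'_def by (rule sum.mono_neutral_cong_right) (use 1 2 in auto)
  have "x + y = (\<Sum>g\<in>A1 \<union> A2. (q1' g + q2' g) * g)"
    using s1 s2 by (simp add: distrib_right sum.distrib)
  moreover have "\<forall>g\<in>A1 \<union> A2. q1' g + q2' g \<in> Polys n"
    using 1 2 by (auto simp: q1'_def q2'_def intro!: Polys_add Polys_zero)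
  ultimately show ?thesis unfolding ideal_gen_def using 1 2
    by (intro CollectI exI[of _ "A1 \<union> A2"] exI[of _ "\<lambda>g. q1' g + q2' g"]) auto
qed

lemma ideal_gen_gen:
  assumes "h \<in> F" "q \<in> Polys n"
  shows "q * h \<in> ideal_gen n (F :: ('a::comm_ring_1) mpoly set)"
proof -
  have "q * h = (\<Sum>g\<in>{h}. (\<lambda>_. q) g * g)" by simp
  thus ?thesis unfolding ideal_gen_def using assms
    by (intro CollectI exI[of _ "{h}"] exI[of _ "\<lambda>_. q"]) auto
qed

lemma ideal_gen_mult:
  assumes "x \<in> ideal_gen n F" "q \<in> Polys n"
  shows "q * x \<in> ideal_gen n (F :: ('a::comm_ring_1) mpoly set)"
proof -
  obtain A1 q1 where 1: "finite A1" "A1 \<subseteq> F" "\<forall>g\<in>A1. q1 g \<in> Polys n" "x = (\<Sum>g\<in>A1. q1 g * g)"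
    using assms(1) unfolding ideal_gen_def by blast
  have "q * x = (\<Sum>g\<in>A1. (q * q1 g) * g)" using 1(4) by (simp add: sum_distrib_left mult.assoc)
  moreover have "\<forall>g\<in>A1. q * q1 g \<in> Polys n" using 1(3) assms(2) Polys_mult by blast
  ultimately show ?thesis unfolding ideal_gen_def using 1
    by (intro CollectI exI[of _ A1] exI[of _ "\<lambda>g. q * q1 g"]) auto
qed

lemma ideal_gen_subset:
  assumes "X \<subseteq> ideal_gen n F"
  shows "ideal_gen n X \<subseteq> ideal_gen n (F :: ('a::comm_ring_1) mpoly set)"
proof
  fix x assume "x \<in> ideal_gen n X"
  then obtain A q where 1: "finite A" "A \<subseteq> X" "\<forall>g\<in>A. q g \<in> Polys n" "x = (\<Sum>g\<in>A. q g * g)"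
    unfolding ideal_gen_def by blast
  have "(\<Sum>g\<in>A. q g * g) \<in> ideal_gen n F" using 1(1,2,3)
  proof (induction A rule: finite_induct)
    case empty then show ?case by (simp add: ideal_gen_zero)
  next
    case (insert a A)
    have "q a * a \<in> ideal_gen n F"
      using insert.prems assms by (intro ideal_gen_mult) auto
    moreover have "(\<Sum>g\<in>A. q g * g) \<in> ideal_gen n F" using insert by blast
    ultimately show ?case using insert.hyps by (simp add: ideal_gen_add)
  qed
  thus "x \<in> ideal_gen n F" using 1(4) by simp
qed




context fixes n :: nat and \<sigma> :: "pp \<Rightarrow> pp \<Rightarrow> bool" assumes TO: "term_order n \<sigma>"
begin
lemma to_refl: "s \<in> PP n \<Longrightarrow> \<sigma> s s" using TO unfolding term_order_def by blast
lemma to_antisym: "s \<in> PP n \<Longrightarrow> t \<in> PP n \<Longrightarrow> \<sigma> s t \<Longrightarrow> \<sigma> t s \<Longrightarrow> s = t"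
  using TO unfolding term_order_def by blast
lemma to_trans: "s \<in> PP n \<Longrightarrow> t \<in> PP n \<Longrightarrow> u \<in> PP n \<Longrightarrow> \<sigma> s t \<Longrightarrow> \<sigma> t u \<Longrightarrow> \<sigma> s u"
  using TO unfolding term_order_def by blast
lemma to_total: "s \<in> PP n \<Longrightarrow> t \<in> PP n \<Longrightarrow> \<sigma> s t \<or> \<sigma> t s"
  using TO unfolding term_order_def by blast
lemma to_zero: "t \<in> PP n \<Longrightarrow> \<sigma> 0 t" using TO unfolding term_order_def by blast
lemma to_compat: "s \<in> PP n \<Longrightarrow> t \<in> PP n \<Longrightarrow> u \<in> PP n \<Longrightarrow> \<sigma> s t \<Longrightarrow> \<sigma> (s + u) (t + u)"
  using TO unfolding term_order_def by blast
end

lemma exists_max: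
  assumes "term_order n \<sigma>" "finite A" "A \<noteq> {}" "A \<subseteq> PP n"
  shows "\<exists>m\<in>A. \<forall>s\<in>A. \<sigma> s m"
  using assms(2,3,4)
proof (induction A rule: finite_ne_induct)
  case (singleton x)
  then show ?case using to_refl[OF assms(1)] by auto
next
  case (insert x F)
  then obtain m where m: "m \<in> F" "\<forall>s\<in>F. \<sigma> s m" by auto
  have xm: "x \<in> PP n" "m \<in> PP n" using insert m by auto
  show ?case
  proof (cases "\<sigma> x m")
    case True then show ?thesis using m by auto
  next
    case False
    hence "\<sigma> m x" using to_total[OF assms(1) xm] by blast
    moreover have "\<forall>s\<in>F. \<sigma> s x"
    proof
      fix s assume "s \<in> F"
      hence "\<sigma> s m" "s \<in> PP n" using m insert by auto
      thus "\<sigma> s x" using \<open>\<sigma> m x\<close> to_trans[OF assms(1) _ xm(2) xm(1)] by blast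
    qed
    moreover have "\<sigma> x x" using to_refl[OF assms(1) xm(1)] .
    ultimately show ?thesis by auto
  qed
qed

lemma lterm_max:
  assumes "term_order n \<sigma>" "Poly_Mapping.keys f \<subseteq> PP n" "f \<noteq> 0"
  shows "lterm \<sigma> f \<in> Poly_Mapping.keys f \<and> (\<forall>s\<in>Poly_Mapping.keys f. \<sigma> s (lterm \<sigma> f))"
proof -
  obtain m where m: "m \<in> Poly_Mapping.keys f" "\<forall>s\<in>Poly_Mapping.keys f. \<sigma> s m"
    using exists_max[OF assms(1) finite_keys _ assms(2)] assms(3) by auto
  have "lterm \<sigma> f = m" unfolding lterm_def
  proof (rule the_equality)
    show "m \<in> Poly_Mapping.keys f \<and> (\<forall>s\<in>Poly_Mapping.keys f. \<sigma> s m)" using m by blast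
  next
    fix t assume t: "t \<in> Poly_Mapping.keys f \<and> (\<forall>s\<in>Poly_Mapping.keys f. \<sigma> s t)"
    hence "\<sigma> t m" "\<sigma> m t" using m by auto
    thus "t = m" using to_antisym[OF assms(1)] assms(2) t m by blast
  qed
  thus ?thesis using m by simp
qed

lemma nat_mono_subseq:
  fixes a :: "nat \<Rightarrow> nat"
  shows "\<exists>h::nat\<Rightarrow>nat. strict_mono h \<and> (\<forall>i j. i \<le> j \<longrightarrow> a (h i) \<le> a (h j))"
proof -
  obtain h :: "nat \<Rightarrow> nat" where h: "strict_mono h" "monoseq (\<lambda>i. a (h i))" using seq_monosub by blast
  show ?thesis
  proof (cases "\<forall>i j. i \<le> j \<longrightarrow> a (h i) \<le> a (h j)")
    case True
    hence "strict_mono h \<and> (\<forall>i j. i \<le> j \<longrightarrow> a (h i) \<le> a (h j))" using h(1) by simp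
    thus ?thesis by blast
  next
    case False
    have "(\<forall>i j. i \<le> j \<longrightarrow> a (h i) \<le> a (h j)) \<or> (\<forall>i j. i \<le> j \<longrightarrow> a (h j) \<le> a (h i))"
      using h(2) unfolding monoseq_def .
    hence dec: "\<forall>i j. i \<le> j \<longrightarrow> a (h j) \<le> a (h i)" using False by blast
    define m where "m = (LEAST v. \<exists>i. v = a (h i))"
    have "\<exists>i. m = a (h i)" unfolding m_def by (rule LeastI[of _ "a (h 0)"]) blast
    then obtain N where N: "a (h N) = m" by auto
    have minm: "m \<le> a (h i)" for i unfolding m_def by (rule Least_le) blast
    have const: "a (h i) = m" if "i \<ge> N" for i
    proof -
      have "a (h i) \<le> a (h N)" using dec that by blast
      thus ?thesis using N minm[of i] by simp
    qed
    have "strict_mono (\<lambda>i. h (i + N))" using h(1) unfolding strict_mono_def by simp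
    moreover have "\<forall>i j. i \<le> j \<longrightarrow> a (h (i + N)) \<le> a (h (j + N))" using const by simp
    ultimately have "strict_mono (\<lambda>i. h (i + N)) \<and> (\<forall>i j. i \<le> j \<longrightarrow> a (h (i + N)) \<le> a (h (j + N)))" by simp
    thus ?thesis by blast
  qed
qed

lemma dickson_aux:
  fixes f :: "nat \<Rightarrow> pp"
  shows "\<exists>g::nat\<Rightarrow>nat. strict_mono g \<and> (\<forall>k<m. \<forall>i j. i \<le> j \<longrightarrow> Poly_Mapping.lookup (f (g i)) k \<le> Poly_Mapping.lookup (f (g j)) k)"
proof (induction m)
  case 0
  have "strict_mono (\<lambda>i::nat. i)" by (simp add: strict_mono_def)
  then show ?case by blast
next
  case (Suc m)
  then obtain g :: "nat \<Rightarrow> nat" where g: "strict_mono g" "\<forall>k<m. \<forall>i j. i \<le> j \<longrightarrow> Poly_Mapping.lookup (f (g i)) k \<le> Poly_Mapping.lookup (f (g j)) k" by blast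
  obtain h :: "nat \<Rightarrow> nat" where h: "strict_mono h" "\<forall>i j. i \<le> j \<longrightarrow> Poly_Mapping.lookup (f (g (h i))) m \<le> Poly_Mapping.lookup (f (g (h j))) m"
    using nat_mono_subseq[of "\<lambda>i. Poly_Mapping.lookup (f (g i)) m"] by blast
  have "strict_mono (g \<circ> h)" using g(1) h(1) by (simp add: strict_mono_def)
  moreover have "\<forall>k<Suc m. \<forall>i j. i \<le> j \<longrightarrow> Poly_Mapping.lookup (f ((g \<circ> h) i)) k \<le> Poly_Mapping.lookup (f ((g \<circ> h) j)) k"
  proof (intro allI impI)
    fix k i j :: nat assume k: "k < Suc m" and ij: "i \<le> j"
    have hij: "h i \<le> h j" using h(1) ij by (simp add: strict_mono_less_eq)
    show "Poly_Mapping.lookup (f ((g \<circ> h) i)) k \<le> Poly_Mapping.lookup (f ((g \<circ> h) j)) k"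
    proof (cases "k = m")
      case True then show ?thesis using h(2) ij by simp
    next
      case False then show ?thesis using g(2) k hij by simp
    qed
  qed
  ultimately show ?case by blast
qed

lemma dickson:
  fixes f :: "nat \<Rightarrow> pp"
  assumes "\<forall>i. f i \<in> PP n"
  shows "\<exists>i j. i < j \<and> (\<forall>k. Poly_Mapping.lookup (f i) k \<le> Poly_Mapping.lookup (f j) k)"
proof -
  obtain g :: "nat \<Rightarrow> nat" where g: "strict_mono g" "\<forall>k<n. \<forall>i j. i \<le> j \<longrightarrow> Poly_Mapping.lookup (f (g i)) k \<le> Poly_Mapping.lookup (f (g j)) k"
    using dickson_aux by blast
  have "\<forall>k. Poly_Mapping.lookup (f (g 0)) k \<le> Poly_Mapping.lookup (f (g 1)) k"
  proof
    fix k show "Poly_Mapping.lookup (f (g 0)) k \<le> Poly_Mapping.lookup (f (g 1)) k"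
    proof (cases "k < n")
      case True then show ?thesis using g(2) by simp
    next
      case False
      hence "k \<notin> Poly_Mapping.keys (f (g 0))" using assms unfolding PP_def by auto
      thus ?thesis by (simp add: in_keys_iff)
    qed
  qed
  moreover have "g 0 < g 1" using g(1) by (simp add: strict_mono_def)
  ultimately show ?thesis by blast
qed

definition lessT :: "nat \<Rightarrow> (pp \<Rightarrow> pp \<Rightarrow> bool) \<Rightarrow> (pp \<times> pp) set" where
  "lessT n \<sigma> = {(s,t). s \<in> PP n \<and> t \<in> PP n \<and> \<sigma> s t \<and> s \<noteq> t}"

lemma lessT_trans:
  assumes "term_order n \<sigma>" "(s,t) \<in> lessT n \<sigma>" "(t,u) \<in> lessT n \<sigma>"
  shows "(s,u) \<in> lessT n \<sigma>"
proof -
  have *: "s \<in> PP n" "t \<in> PP n" "u \<in> PP n" "\<sigma> s t" "\<sigma> t u" "s \<noteq> t" "t \<noteq> u"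
    using assms(2,3) unfolding lessT_def by auto
  have "\<sigma> s u" using to_trans[OF assms(1) *(1,2,3,4,5)] .
  moreover have "s \<noteq> u"
  proof
    assume "s = u"
    hence "\<sigma> u t" using * by simp
    hence "t = u" using to_antisym[OF assms(1) *(2,3) *(5)] by blast
    thus False using * by simp
  qed
  ultimately show ?thesis using * unfolding lessT_def by simp
qed

lemma wf_lessT:
  assumes "term_order n \<sigma>"
  shows "wf (lessT n \<sigma>)"
  unfolding wf_iff_no_infinite_down_chain
proof
  assume "\<exists>c. \<forall>i. (c (Suc i), c i) \<in> lessT n \<sigma>"
  then obtain c where c: "\<forall>i. (c (Suc i), c i) \<in> lessT n \<sigma>" by blast
  have PPc: "\<forall>i. c i \<in> PP n" using c unfolding lessT_def by blast
  have ch: "(c j, c i) \<in> lessT n \<sigma>" if "i < j" for i j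
    using that
  proof (induction j)
    case 0 then show ?case by simp
  next
    case (Suc j)
    show ?case
    proof (cases "i = j")
      case True then show ?thesis using c by simp
    next
      case False
      hence "(c j, c i) \<in> lessT n \<sigma>" using Suc by simp
      thus ?thesis using lessT_trans[OF assms] c by blast
    qed
  qed
  obtain i j where ij: "i < j" "\<forall>k. Poly_Mapping.lookup (c i) k \<le> Poly_Mapping.lookup (c j) k"
    using dickson[OF PPc] by blast
  define u where "u = c j - c i"
  have cj: "c j = c i + u"
    by (rule poly_mapping_eqI) (use ij(2) in \<open>simp add: u_def lookup_add lookup_minus\<close>)
  have "Poly_Mapping.keys u \<subseteq> Poly_Mapping.keys (c j)"
    unfolding u_def by (auto simp: in_keys_iff lookup_minus)
  hence uP: "u \<in> PP n" using PPc unfolding PP_def by blast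
  have z: "(0::pp) \<in> PP n" unfolding PP_def by simp
  have "\<sigma> 0 u" using to_zero[OF assms uP] .
  hence "\<sigma> (0 + c i) (u + c i)" using to_compat[OF assms z uP] PPc by blast
  hence "\<sigma> (c i) (c j)" using cj by (simp add: add.commute)
  moreover have "\<sigma> (c j) (c i)" "c j \<noteq> c i" using ch[OF ij(1)] unfolding lessT_def by auto
  ultimately show False using to_antisym[OF assms] PPc by blast
qed




lemma keys_add_pp: "Poly_Mapping.keys (a::pp) \<subseteq> Poly_Mapping.keys (a + b) \<and> Poly_Mapping.keys b \<subseteq> Poly_Mapping.keys (a + b)"
  by (auto simp: in_keys_iff lookup_add)

lemma red_poly_zero: "(red_poly 0 :: 'p::prime_card mod_ring mpoly) = 0"
  by (rule poly_mapping_eqI) (simp add: lookup_red red_coeff_0)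

lemma main_red:
  assumes TO: "term_order n \<sigma>" and GB: "reduced_GB n \<sigma> I G" and ID: "is_ideal n I"
    and NDG: "\<forall>g\<in>G. \<forall>s. intg CARD('p::prime_card) (Poly_Mapping.lookup g s)"
  shows "f \<in> I \<Longrightarrow> \<forall>s. intg CARD('p) (Poly_Mapping.lookup f s) \<Longrightarrow>
     (red_poly f :: 'p mod_ring mpoly) \<in> ideal_gen n (red_poly ` G)"
proof -
  let ?J = "ideal_gen n (red_poly ` G :: 'p mod_ring mpoly set)"
  have IP: "I \<subseteq> Polys n" and Iadd: "\<And>x y. x \<in> I \<Longrightarrow> y \<in> I \<Longrightarrow> x + y \<in> I"
    and Imul: "\<And>x q. x \<in> I \<Longrightarrow> q \<in> Polys n \<Longrightarrow> q * x \<in> I"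
    using ID unfolding is_ideal_def by auto
  have GI: "G \<subseteq> I" and G0: "0 \<notin> G"
    and GL: "\<And>f. f \<in> I \<Longrightarrow> f \<noteq> 0 \<Longrightarrow> \<exists>g\<in>G. pp_dvd (lterm \<sigma> g) (lterm \<sigma> f)"
    and GC: "\<And>g. g \<in> G \<Longrightarrow> lcoeff \<sigma> g = 1"
    using GB unfolding reduced_GB_def by auto
  have claim: "\<forall>f. f \<in> I \<and> (\<forall>s. intg CARD('p) (Poly_Mapping.lookup f s)) \<and> f \<noteq> 0 \<and> lterm \<sigma> f = t
      \<longrightarrow> (red_poly f :: 'p mod_ring mpoly) \<in> ?J" for t
  proof (induction t rule: wf_induct[OF wf_lessT[OF TO]])
    case (1 t)
    show ?case
    proof (intro allI impI, elim conjE)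
      fix f :: "rat mpoly"
      assume fI: "f \<in> I" and fint: "\<forall>s. intg CARD('p) (Poly_Mapping.lookup f s)" and f0: "f \<noteq> 0"
        and ft: "lterm \<sigma> f = t"
      have fP: "Poly_Mapping.keys f \<subseteq> PP n" using fI IP unfolding Polys_def by auto
      have lm: "t \<in> Poly_Mapping.keys f" "\<forall>s\<in>Poly_Mapping.keys f. \<sigma> s t"
        using lterm_max[OF TO fP f0] ft by auto
      have tP: "t \<in> PP n" using lm fP by auto
      obtain h where hG: "h \<in> G" and hd: "pp_dvd (lterm \<sigma> h) t" using GL[OF fI f0] ft by auto
      obtain u where tu: "t = lterm \<sigma> h + u" using hd unfolding pp_dvd_def by auto
      have hI: "h \<in> I" using hG GI by auto
      have h0: "h \<noteq> 0" using hG G0 by auto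
      have hP: "Poly_Mapping.keys h \<subseteq> PP n" using hI IP unfolding Polys_def by auto
      have lmh: "lterm \<sigma> h \<in> Poly_Mapping.keys h" "\<forall>s\<in>Poly_Mapping.keys h. \<sigma> s (lterm \<sigma> h)"
        using lterm_max[OF TO hP h0] by auto
      have lh1: "Poly_Mapping.lookup h (lterm \<sigma> h) = 1" using GC[OF hG] unfolding lcoeff_def .
      have lhP: "lterm \<sigma> h \<in> PP n" using lmh hP by auto
      have uP: "u \<in> PP n" using tP tu keys_add_pp[of "lterm \<sigma> h" u] unfolding PP_def by auto
      define c where "c = Poly_Mapping.lookup f t"
      define M where "M = Poly_Mapping.single u (-c) * h"
      define f' where "f' = f + M"
      have MI: "M \<in> I" unfolding M_def using Imul[OF hI Polys_single[OF uP]] .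
      have f'I: "f' \<in> I" unfolding f'_def using Iadd[OF fI MI] .
      have lM: "Poly_Mapping.lookup M s = (if \<exists>v. s = u + v then - c * Poly_Mapping.lookup h (s - u) else 0)" for s
        unfolding M_def by (rule lookup_single_mult)
      have lf': "Poly_Mapping.lookup f' s = Poly_Mapping.lookup f s + Poly_Mapping.lookup M s" for s
        unfolding f'_def by (simp add: lookup_add)
      have cint: "intg CARD('p) c" using fint unfolding c_def by blast
      have hint: "\<forall>s. intg CARD('p) (Poly_Mapping.lookup h s)" using NDG hG by blast
      have Mint: "intg CARD('p) (Poly_Mapping.lookup M s) \<and>
         (red_coeff (Poly_Mapping.lookup M s) :: 'p mod_ring) =
           (if \<exists>v. s = u + v then - red_coeff c * red_coeff (Poly_Mapping.lookup h (s - u)) else 0)" for s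
      proof (cases "\<exists>v. s = u + v")
        case True
        have "intg CARD('p) (- c) \<and> (red_coeff (-c) :: 'p mod_ring) = - red_coeff c"
          using intg_neg[OF cint] .
        then show ?thesis using True lM[of s] intg_mult[OF _ hint[rule_format, of "s - u"], of "-c"] by auto
      next
        case False
        then show ?thesis using lM[of s] intg_0[where 'p='p] red_coeff_0[where 'p='p] by auto
      qed
      have f'int: "\<forall>s. intg CARD('p) (Poly_Mapping.lookup f' s)"
        using lf' intg_add[OF fint[rule_format] conjunct1[OF Mint]] by auto
      have redf: "(red_poly f :: 'p mod_ring mpoly) = red_poly f' + Poly_Mapping.single u (red_coeff c) * red_poly h"
      proof (rule poly_mapping_eqI)
        fix s
        have e1: "Poly_Mapping.lookup (Poly_Mapping.single u (red_coeff c) * (red_poly h :: 'p mod_ring mpoly)) s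
           = (if \<exists>v. s = u + v then red_coeff c * red_coeff (Poly_Mapping.lookup h (s - u)) else 0)"
          by (simp add: lookup_single_mult lookup_red)
        have e2: "(red_coeff (Poly_Mapping.lookup f' s) :: 'p mod_ring) = red_coeff (Poly_Mapping.lookup f s) + red_coeff (Poly_Mapping.lookup M s)"
          using lf' intg_add[OF fint[rule_format] conjunct1[OF Mint]] by auto
        show "Poly_Mapping.lookup (red_poly f :: 'p mod_ring mpoly) s =
          Poly_Mapping.lookup (red_poly f' + Poly_Mapping.single u (red_coeff c) * red_poly h) s"
          using e1 e2 conjunct2[OF Mint[of s]] by (simp add: lookup_add lookup_red)
      qed
      have hJ: "Poly_Mapping.single u (red_coeff c) * (red_poly h :: 'p mod_ring mpoly) \<in> ?J"
        by (rule ideal_gen_gen) (use hG Polys_single[OF uP] in auto)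
      show "(red_poly f :: 'p mod_ring mpoly) \<in> ?J"
      proof (cases "f' = 0")
        case True
        then show ?thesis using redf hJ by (simp add: red_poly_zero)
      next
        case False
        have f'P: "Poly_Mapping.keys f' \<subseteq> PP n" using f'I IP unfolding Polys_def by auto
        have lt': "lterm \<sigma> f' \<in> Poly_Mapping.keys f'" using lterm_max[OF TO f'P False] by auto
        have tnot: "Poly_Mapping.lookup f' t = 0"
        proof -
          have "t - u = lterm \<sigma> h" using tu by simp
          hence "Poly_Mapping.lookup M t = - c" using lM[of t] tu lh1 by (auto simp: add.commute)
          thus ?thesis using lf'[of t] unfolding c_def by simp
        qed
        have below: "\<sigma> s t" if "s \<in> Poly_Mapping.keys f'" for s
        proof (cases "s \<in> Poly_Mapping.keys f")
          case True then show ?thesis using lm by auto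
        next
          case False
          hence "Poly_Mapping.lookup M s \<noteq> 0" using that lf'[of s] by (auto simp: in_keys_iff)
          then obtain v where v: "s = u + v" and hv: "Poly_Mapping.lookup h (s - u) \<noteq> 0"
            using lM[of s] by (auto split: if_splits)
          have vv: "s - u = v" using v by simp
          have vk: "v \<in> Poly_Mapping.keys h" using hv vv by (simp add: in_keys_iff)
          have vP: "v \<in> PP n" using vk hP by auto
          have "\<sigma> v (lterm \<sigma> h)" using lmh vk by auto
          hence "\<sigma> (v + u) (lterm \<sigma> h + u)" using to_compat[OF TO vP lhP uP] by blast
          thus ?thesis using v tu by (simp add: add.commute)
        qed
        have "(lterm \<sigma> f', t) \<in> lessT n \<sigma>"
          unfolding lessT_def using lt' f'P tP below[OF lt'] tnot by (auto simp: in_keys_iff)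
        hence "(red_poly f' :: 'p mod_ring mpoly) \<in> ?J"
          using 1 f'I f'int False by blast
        thus ?thesis using redf hJ ideal_gen_add by metis
      qed
    qed
  qed
  assume fI: "f \<in> I" and fint: "\<forall>s. intg CARD('p) (Poly_Mapping.lookup f s)"
  show "(red_poly f :: 'p mod_ring mpoly) \<in> ?J"
  proof (cases "f = 0")
    case True then show ?thesis by (simp add: red_poly_zero ideal_gen_zero)
  next
    case False then show ?thesis using claim[of "lterm \<sigma> f"] fI fint by blast
  qed
qed




lemma G_intg:
  assumes "\<not> CARD('p::prime_card) dvd den_set G" "g \<in> G"
  shows "intg CARD('p) (Poly_Mapping.lookup g s)"
proof (cases "s \<in> Poly_Mapping.keys g")
  case False
  hence "Poly_Mapping.lookup g s = 0" by (simp add: in_keys_iff)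
  thus ?thesis using intg_0[where 'p='p] by simp
next
  case True
  obtain a b where q: "quotient_of (Poly_Mapping.lookup g s) = (a, b)" by (cases "quotient_of (Poly_Mapping.lookup g s)")
  have bpos: "b > 0" using q quotient_of_denom_pos by blast
  have e: "Poly_Mapping.lookup g s = of_int a / of_int b" using q quotient_of_div by blast
  have "nat b dvd den g" unfolding den_def
    by (rule dvd_Lcm) (use True q in force)
  moreover have "den g dvd den_set G" unfolding den_set_def by (rule dvd_Lcm) (use assms(2) in blast)
  ultimately have "\<not> CARD('p) dvd nat b" using assms(1) dvd_trans by blast
  moreover have "b = int (nat b)" using bpos by simp
  ultimately have "\<not> int CARD('p) dvd b" by (metis of_nat_dvd_iff)
  thus ?thesis unfolding intg_def using e by blast
qed

theorem proposition2p14: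
  fixes n :: nat and I :: "rat mpoly set"
    and \<sigma> \<tau> :: "pp \<Rightarrow> pp \<Rightarrow> bool"
    and G H :: "rat mpoly set"
  assumes "is_ideal n I"
    and "\<not> CARD('p::prime_card) dvd univ_den n I"
    and "term_order n \<sigma>" and "reduced_GB n \<sigma> I G"
    and "term_order n \<tau>" and "reduced_GB n \<tau> I H"
  shows "ideal_gen n ((red_poly :: rat mpoly \<Rightarrow> 'p mod_ring mpoly) ` G)
       = ideal_gen n ((red_poly :: rat mpoly \<Rightarrow> 'p mod_ring mpoly) ` H)"
proof -
  have dG: "\<not> CARD('p) dvd den_set G"
  proof
    assume "CARD('p) dvd den_set G"
    moreover have "den_set G dvd univ_den n I" unfolding univ_den_def
      by (rule dvd_Lcm) (use assms(3,4) in blast)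
    ultimately show False using assms(2) dvd_trans by blast
  qed
  have dH: "\<not> CARD('p) dvd den_set H"
  proof
    assume "CARD('p) dvd den_set H"
    moreover have "den_set H dvd univ_den n I" unfolding univ_den_def
      by (rule dvd_Lcm) (use assms(5,6) in blast)
    ultimately show False using assms(2) dvd_trans by blast
  qed
  have HI: "H \<subseteq> I" using assms(6) unfolding reduced_GB_def by auto
  have GI: "G \<subseteq> I" using assms(4) unfolding reduced_GB_def by auto
  have 1: "(red_poly :: rat mpoly \<Rightarrow> 'p mod_ring mpoly) ` H \<subseteq> ideal_gen n ((red_poly :: rat mpoly \<Rightarrow> 'p mod_ring mpoly) ` G)"
  proof
    fix x assume "x \<in> (red_poly :: rat mpoly \<Rightarrow> 'p mod_ring mpoly) ` H"
    then obtain h where h: "h \<in> H" "x = red_poly h" by auto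
    show "x \<in> ideal_gen n ((red_poly :: rat mpoly \<Rightarrow> 'p mod_ring mpoly) ` G)"
      unfolding h(2)
      by (rule main_red[OF assms(3,4,1)]) (use G_intg[OF dG] G_intg[OF dH] h(1) HI in auto)
  qed
  have 2: "(red_poly :: rat mpoly \<Rightarrow> 'p mod_ring mpoly) ` G \<subseteq> ideal_gen n ((red_poly :: rat mpoly \<Rightarrow> 'p mod_ring mpoly) ` H)"
  proof
    fix x assume "x \<in> (red_poly :: rat mpoly \<Rightarrow> 'p mod_ring mpoly) ` G"
    then obtain h where h: "h \<in> G" "x = red_poly h" by auto
    show "x \<in> ideal_gen n ((red_poly :: rat mpoly \<Rightarrow> 'p mod_ring mpoly) ` H)"
      unfolding h(2)
      by (rule main_red[OF assms(5,6,1)]) (use G_intg[OF dG] G_intg[OF dH] h(1) GI in auto)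
  qed
  show ?thesis using ideal_gen_subset[OF 1] ideal_gen_subset[OF 2] by blast
qed


end
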